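(* Let $S$ be a finite subdirectly indecomposable semigroup such that $\llbracket S\rrbracket$ is join irreducible and $S$ is of semisimple type (left letter mapping, right letter mapping, or group mapping). Then $\operatorname{Excl}(S)$ is large, i.e. $\mathbf{1}\mathbin{ⓜ}\operatorname{Excl}(S)=\operatorname{Excl}(S)$.
   Context: All semigroups are finite. A pseudovariety is a class of finite semigroups closed under finite direct products, subsemigroups and homomorphic images; $\llbracket S\rrbracket$ is the pseudovariety generated by $S$; $\mathbf{1}$ is the trivial pseudovariety. A pseudovariety $\mathbf{V}$ is join irreducible if for every set $\mathscr{X}$ of pseudovarieties, $\mathbf{V}\subseteq\bigvee\mathscr{X}$ implies $\mathbf{V}\subseteq\mathbf{X}$ for some $\mathbf{X}\in\mathscr{X}$; $\operatorname{Excl}(S)$ is the class of finite semigroups $T$ with $S\notin\llbracket T\rrbracket$ (a pseudovariety when $\llbracket S\rrbracket$ is join irreducible). The Mal'cev product $\mathbf{V}\mathbin{ⓜ}\mathbf{W}$ is the pseudovariety generated by all finite semigroups $S$ admitting a homomorphism $\varphi\colon S\to T$ with $T\in\mathbf{W}$ and $e\varphi^{-1}\in\mathbf{V}$ for every idempotent $e\in T$. A semigroup $S$ is subdirectly indecomposable if whenever $S$ is a subsemigroup of $S_1\times S_2$ projecting onto both factors, one of the projections is an isomorphism. Such a finite $S$ has a unique $0$-minimal ideal $I$ (the minimal ideal if $S$ has no zero). $S$ is left letter mapping if $S$ acts faithfully on the right of the set of $\mathscr L$-classes of $I$; right letter mapping if $S$ acts faithfully on the left of the set of $\mathscr R$-classes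 of $I$; group mapping if $I$ contains a nontrivial maximal subgroup and $S$ acts faithfully on both the left and the right of $I$. *)

theory Defs
  imports Main "HOL-Library.Nat_Bijection"
begin

text \<open>Finite semigroups are represented concretely by a carrier set of natural
numbers together with a binary operation (only its values on the carrier matter).
Every finite semigroup is isomorphic to such a structure, and all classes below are
closed under isomorphism, so this loses no generality.\<close>

type_synonym sg = "nat set \<times> (nat \<Rightarrow> nat \<Rightarrow> nat)"

definition sgrp :: "'a set \<Rightarrow> ('a \<Rightarrow> 'a \<Rightarrow> 'a) \<Rightarrow> bool" where
  "sgrp A m \<longleftrightarrow> finite A \<and> A \<noteq> {} \<and> (\<forall>x\<in>A. \<forall>y\<in>A. m x y \<in> A) \<and>
     (\<forall>x\<in>A. \<forall>y\<in>A. \<forall>z\<in>A. m (m x y) z = m x (m y z))"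

definition is_sg :: "sg \<Rightarrow> bool" where
  "is_sg S \<longleftrightarrow> sgrp (fst S) (snd S)"

definition hom :: "'a set \<Rightarrow> ('a \<Rightarrow> 'a \<Rightarrow> 'a) \<Rightarrow> 'b set \<Rightarrow> ('b \<Rightarrow> 'b \<Rightarrow> 'b) \<Rightarrow> ('a \<Rightarrow> 'b) \<Rightarrow> bool" where
  "hom A m B n h \<longleftrightarrow> (\<forall>x\<in>A. h x \<in> B) \<and> (\<forall>x\<in>A. \<forall>y\<in>A. h (m x y) = n (h x) (h y))"

definition prod_sg :: "sg \<Rightarrow> sg \<Rightarrow> sg" where
  "prod_sg S T = (prod_encode ` (fst S \<times> fst T),
     (\<lambda>x y. prod_encode (snd S (fst (prod_decode x)) (fst (prod_decode y)),
                          snd T (snd (prod_decode x)) (snd (prod_decode y)))))"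

definition pseudovariety :: "sg set \<Rightarrow> bool" where
  "pseudovariety V \<longleftrightarrow>
     V \<noteq> {} \<and> (\<forall>S\<in>V. is_sg S) \<and>
     (\<forall>S\<in>V. \<forall>T\<in>V. prod_sg S T \<in> V) \<and>
     (\<forall>A m B. (A, m) \<in> V \<longrightarrow> B \<subseteq> A \<longrightarrow> sgrp B m \<longrightarrow> (B, m) \<in> V) \<and>
     (\<forall>A m B n h. (A, m) \<in> V \<longrightarrow> sgrp B n \<longrightarrow> hom A m B n h \<longrightarrow> h ` A = B \<longrightarrow> (B, n) \<in> V)"

definition pv_gen :: "sg set \<Rightarrow> sg set" where
  "pv_gen C = \<Inter>{V. pseudovariety V \<and> C \<subseteq> V}"

definition pv_gen1 :: "sg \<Rightarrow> sg set" where
  "pv_gen1 S = pv_gen {S}"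

definition pv_join :: "sg set set \<Rightarrow> sg set" where
  "pv_join \<X> = pv_gen (\<Union>\<X>)"

definition join_irreducible :: "sg set \<Rightarrow> bool" where
  "join_irreducible V \<longleftrightarrow>
     (\<forall>\<X>. (\<forall>X\<in>\<X>. pseudovariety X) \<longrightarrow> V \<subseteq> pv_join \<X> \<longrightarrow> (\<exists>X\<in>\<X>. V \<subseteq> X))"

definition triv_pv :: "sg set" where
  "triv_pv = {S. is_sg S \<and> card (fst S) = 1}"

definition Excl :: "sg \<Rightarrow> sg set" where
  "Excl S = {T. is_sg T \<and> S \<notin> pv_gen1 T}"

text \<open>Mal'cev product: generated by all S admitting a homomorphism into some T in W such
that the preimage of each idempotent (when nonempty, i.e. a subsemigroup) lies in V.\<close>
definition malcev :: "sg set \<Rightarrow> sg set \<Rightarrow> sg set" where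
  "malcev V W = pv_gen {(A, m). sgrp A m \<and>
      (\<exists>B n \<phi>. (B, n) \<in> W \<and> hom A m B n \<phi> \<and>
         (\<forall>e\<in>B. n e e = e \<longrightarrow> {s\<in>A. \<phi> s = e} \<noteq> {} \<longrightarrow> ({s\<in>A. \<phi> s = e}, m) \<in> V))}"

definition subdirectly_indecomposable :: "nat set \<Rightarrow> (nat \<Rightarrow> nat \<Rightarrow> nat) \<Rightarrow> bool" where
  "subdirectly_indecomposable A m \<longleftrightarrow>
     (\<forall>B1 n1 B2 n2 (f1::nat\<Rightarrow>nat) (f2::nat\<Rightarrow>nat).
        sgrp B1 n1 \<longrightarrow> sgrp B2 n2 \<longrightarrow> hom A m B1 n1 f1 \<longrightarrow> hom A m B2 n2 f2 \<longrightarrow>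
        f1 ` A = B1 \<longrightarrow> f2 ` A = B2 \<longrightarrow> inj_on (\<lambda>x. (f1 x, f2 x)) A \<longrightarrow>
        inj_on f1 A \<or> inj_on f2 A)"

definition is_ideal :: "'a set \<Rightarrow> ('a \<Rightarrow> 'a \<Rightarrow> 'a) \<Rightarrow> 'a set \<Rightarrow> bool" where
  "is_ideal A m I \<longleftrightarrow> I \<noteq> {} \<and> I \<subseteq> A \<and> (\<forall>s\<in>A. \<forall>x\<in>I. m s x \<in> I \<and> m x s \<in> I)"

definition is_zero :: "'a set \<Rightarrow> ('a \<Rightarrow> 'a \<Rightarrow> 'a) \<Rightarrow> 'a \<Rightarrow> bool" where
  "is_zero A m z \<longleftrightarrow> z \<in> A \<and> (\<forall>x\<in>A. m z x = z \<and> m x z = z)"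

definition minimal_ideal :: "'a set \<Rightarrow> ('a \<Rightarrow> 'a \<Rightarrow> 'a) \<Rightarrow> 'a set \<Rightarrow> bool" where
  "minimal_ideal A m I \<longleftrightarrow> is_ideal A m I \<and> (\<forall>J. is_ideal A m J \<longrightarrow> J \<subseteq> I \<longrightarrow> J = I)"

definition zero_minimal_ideal :: "'a set \<Rightarrow> ('a \<Rightarrow> 'a \<Rightarrow> 'a) \<Rightarrow> 'a \<Rightarrow> 'a set \<Rightarrow> bool" where
  "zero_minimal_ideal A m z I \<longleftrightarrow> is_ideal A m I \<and> I \<noteq> {z} \<and>
     (\<forall>J. is_ideal A m J \<longrightarrow> J \<subseteq> I \<longrightarrow> J = {z} \<or> J = I)"

definition distinguished_ideal :: "'a set \<Rightarrow> ('a \<Rightarrow> 'a \<Rightarrow> 'a) \<Rightarrow> 'a set \<Rightarrow> bool" where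
  "distinguished_ideal A m I \<longleftrightarrow>
     (if \<exists>z. is_zero A m z then (\<exists>z. is_zero A m z \<and> zero_minimal_ideal A m z I)
      else minimal_ideal A m I)"

text \<open>Green's relations (S^1 x = S^1 y, x S^1 = y S^1, and H = L meet R).\<close>
definition Lrel :: "'a set \<Rightarrow> ('a \<Rightarrow> 'a \<Rightarrow> 'a) \<Rightarrow> 'a \<Rightarrow> 'a \<Rightarrow> bool" where
  "Lrel A m x y \<longleftrightarrow> x \<in> A \<and> y \<in> A \<and>
     (x = y \<or> (\<exists>u\<in>A. x = m u y)) \<and> (y = x \<or> (\<exists>v\<in>A. y = m v x))"

definition Rrel :: "'a set \<Rightarrow> ('a \<Rightarrow> 'a \<Rightarrow> 'a) \<Rightarrow> 'a \<Rightarrow> 'a \<Rightarrow> bool" where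
  "Rrel A m x y \<longleftrightarrow> x \<in> A \<and> y \<in> A \<and>
     (x = y \<or> (\<exists>u\<in>A. x = m y u)) \<and> (y = x \<or> (\<exists>v\<in>A. y = m x v))"

text \<open>S acts faithfully on the right of the set of L-classes of I (the class of x
is sent by s to the class of xs).\<close>
definition left_letter_mapping :: "nat set \<Rightarrow> (nat \<Rightarrow> nat \<Rightarrow> nat) \<Rightarrow> bool" where
  "left_letter_mapping A m \<longleftrightarrow> (\<exists>I. distinguished_ideal A m I \<and>
     (\<forall>s\<in>A. \<forall>t\<in>A. (\<forall>x\<in>I. Lrel A m (m x s) (m x t)) \<longrightarrow> s = t))"

definition right_letter_mapping :: "nat set \<Rightarrow> (nat \<Rightarrow> nat \<Rightarrow> nat) \<Rightarrow> bool" where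
  "right_letter_mapping A m \<longleftrightarrow> (\<exists>I. distinguished_ideal A m I \<and>
     (\<forall>s\<in>A. \<forall>t\<in>A. (\<forall>x\<in>I. Rrel A m (m s x) (m t x)) \<longrightarrow> s = t))"

definition is_subgroup :: "'a set \<Rightarrow> ('a \<Rightarrow> 'a \<Rightarrow> 'a) \<Rightarrow> 'a set \<Rightarrow> bool" where
  "is_subgroup A m G \<longleftrightarrow> G \<subseteq> A \<and> G \<noteq> {} \<and> (\<forall>x\<in>G. \<forall>y\<in>G. m x y \<in> G) \<and>
     (\<exists>e\<in>G. \<forall>g\<in>G. m e g = g \<and> m g e = g \<and> (\<exists>h\<in>G. m g h = e \<and> m h g = e))"

definition maximal_subgroup :: "'a set \<Rightarrow> ('a \<Rightarrow> 'a \<Rightarrow> 'a) \<Rightarrow> 'a set \<Rightarrow> bool" where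
  "maximal_subgroup A m G \<longleftrightarrow> is_subgroup A m G \<and>
     (\<forall>G'. is_subgroup A m G' \<longrightarrow> G \<subseteq> G' \<longrightarrow> G' = G)"

definition group_mapping :: "nat set \<Rightarrow> (nat \<Rightarrow> nat \<Rightarrow> nat) \<Rightarrow> bool" where
  "group_mapping A m \<longleftrightarrow> (\<exists>I. distinguished_ideal A m I \<and>
     (\<exists>G. maximal_subgroup A m G \<and> G \<subseteq> I \<and> card G > 1) \<and>
     (\<forall>s\<in>A. \<forall>t\<in>A. (\<forall>x\<in>I. m s x = m t x) \<longrightarrow> s = t) \<and>
     (\<forall>s\<in>A. \<forall>t\<in>A. (\<forall>x\<in>I. m x s = m x t) \<longrightarrow> s = t))"

definition semisimple_type :: "nat set \<Rightarrow> (nat \<Rightarrow> nat \<Rightarrow> nat) \<Rightarrow> bool" where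
  "semisimple_type A m \<longleftrightarrow> left_letter_mapping A m \<or> right_letter_mapping A m \<or> group_mapping A m"

end

theory Submission
  imports Defs
begin


fun pw :: "('a \<Rightarrow> 'a \<Rightarrow> 'a) \<Rightarrow> 'a \<Rightarrow> nat \<Rightarrow> 'a" where
  "pw m a 0 = a"
| "pw m a (Suc k) = m (pw m a k) a"

locale fsg =
  fixes A :: "'a set" and m :: "'a \<Rightarrow> 'a \<Rightarrow> 'a"
  assumes sg: "sgrp A m"
begin

lemma fin: "finite A" and ne: "A \<noteq> {}" and cl[simp,intro]: "x\<in>A \<Longrightarrow> y\<in>A \<Longrightarrow> m x y \<in> A"
  and assoc: "x\<in>A \<Longrightarrow> y\<in>A \<Longrightarrow> z\<in>A \<Longrightarrow> m (m x y) z = m x (m y z)"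
  using sg unfolding sgrp_def by auto

lemma pw_in[simp,intro]: "a\<in>A \<Longrightarrow> pw m a k \<in> A" by (induction k) auto

lemma pw_left: "a\<in>A \<Longrightarrow> pw m a (Suc k) = m a (pw m a k)"
  by (induction k) (auto simp: assoc)

lemma pw_add: "a\<in>A \<Longrightarrow> m (pw m a i) (pw m a j) = pw m a (Suc (i+j))"
proof (induction j)
  case 0 then show ?case by simp
next
  case (Suc j)
  have "m (pw m a i) (pw m a (Suc j)) = m (m (pw m a i) (pw m a j)) a"
    using Suc.prems by (simp add: assoc)
  also have "\<dots> = pw m a (Suc (i + Suc j))" using Suc by simp
  finally show ?case .
qed

lemma idem_pow: assumes a: "a\<in>A" shows "\<exists>k. m (pw m a k) (pw m a k) = pw m a k"
proof -
  have "range (pw m a) \<subseteq> A" using a by auto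
  hence "finite (range (pw m a))" using fin finite_subset by blast
  hence "\<not> inj (pw m a)" using finite_imageD infinite_UNIV_nat by blast
  then obtain x y where xy: "x \<noteq> y" "pw m a x = pw m a y" unfolding inj_def by blast
  obtain i j where ij: "i < j" "pw m a i = pw m a j"
    using xy by (metis linorder_neqE_nat)
  define d where "d = j - i"
  have d: "d > 0" "j = i + d" using ij unfolding d_def by auto
  have per: "pw m a (n + d) = pw m a n" if "n \<ge> i" for n
    using that
  proof (induction n rule: dec_induct)
    case base then show ?case using ij d by simp
  next
    case (step n) then show ?case by simp
  qed
  have perc: "pw m a (n + c*d) = pw m a n" if "n \<ge> i" for n c
  proof (induction c)
    case 0 then show ?case by simp
  next
    case (Suc c)
    have "pw m a (n + Suc c * d) = pw m a ((n + c*d) + d)" by (simp add: algebra_simps)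
    also have "\<dots> = pw m a (n + c*d)" using per[of "n + c*d"] that by simp
    finally show ?case using Suc by simp
  qed
  define N where "N = d*(i+1) - 1"
  have N1: "N + 1 = (i+1)*d" using d unfolding N_def by (simp add: algebra_simps)
  have Ni: "N \<ge> i" using d N1 by (metis add_le_cancel_right le_add1 le_trans mult_le_mono2 mult.commute Suc_leI mult_1_right One_nat_def)
  have "m (pw m a N) (pw m a N) = pw m a (N + (N+1))" using pw_add[OF a] by simp
  also have "\<dots> = pw m a N" using perc[OF Ni, of "i+1"] N1 by simp
  finally show ?thesis by blast
qed

lemma idem_pw_eq: "e\<in>A \<Longrightarrow> m e e = e \<Longrightarrow> pw m e k = e"
  by (induction k) auto

lemma iter: assumes "a\<in>A" "b\<in>A" "x\<in>A" "x = m (m a x) b"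
  shows "x = m (m (pw m a k) x) (pw m b k)"
proof (induction k)
  case 0 then show ?case using assms by simp
next
  case (Suc k)
  have "x = m a (m x b)" using assms by (simp add: assoc)
  also have "\<dots> = m a (m (m (m (pw m a k) x) (pw m b k)) b)" using Suc by simp
  also have "\<dots> = m (m (pw m a (Suc k)) x) (pw m b (Suc k))"
    using assms by (subst pw_left[OF assms(1)]) (simp add: assoc)
  finally show ?case .
qed

lemma LL: assumes "a\<in>A" "b\<in>A" "x\<in>A" "x = m (m a x) b"
  shows "\<exists>z\<in>A. x = m z (m a x)"
proof -
  obtain k where k: "m (pw m b k) (pw m b k) = pw m b k" using idem_pow assms by blast
  have x1: "x = m (m (pw m a k) x) (pw m b k)" using iter assms by blast
  have "m x (pw m b k) = x"
  proof -
    have "m x (pw m b k) = m (m (m (pw m a k) x) (pw m b k)) (pw m b k)" using x1 by simp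
    also have "\<dots> = m (m (pw m a k) x) (m (pw m b k) (pw m b k))" using assms by (simp add: assoc)
    also have "\<dots> = x" using k x1 by simp
    finally show ?thesis .
  qed
  hence x2: "x = m (pw m a k) x" using x1 assms by (simp add: assoc)
  show ?thesis
  proof (cases k)
    case 0 then show ?thesis using x2 assms by (intro bexI[of _ a]) auto
  next
    case (Suc j)
    then show ?thesis using x2 assms by (intro bexI[of _ "pw m a j"]) (auto simp: assoc)
  qed
qed

lemma LR: assumes "a\<in>A" "b\<in>A" "x\<in>A" "x = m (m a x) b"
  shows "\<exists>z\<in>A. x = m (m x b) z"
proof -
  obtain k where k: "m (pw m a k) (pw m a k) = pw m a k" using idem_pow assms by blast
  have x1: "x = m (m (pw m a k) x) (pw m b k)" using iter assms by blast
  have "m (pw m a k) x = x"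
  proof -
    have "m (pw m a k) x = m (pw m a k) (m (m (pw m a k) x) (pw m b k))" using x1 by simp
    also have "\<dots> = m (m (m (pw m a k) (pw m a k)) x) (pw m b k)" using assms by (simp add: assoc)
    also have "\<dots> = x" using k x1 by simp
    finally show ?thesis .
  qed
  hence x2: "x = m x (pw m b k)" using x1 assms by (simp add: assoc)
  show ?thesis
  proof (cases k)
    case 0 then show ?thesis using x2 assms by (intro bexI[of _ b]) (auto simp: assoc)
  next
    case (Suc j)
    have "x = m x (m b (pw m b j))" using x2 Suc pw_left[OF assms(2), of j] by simp
    then show ?thesis using assms by (intro bexI[of _ "pw m b j"]) (auto simp: assoc)
  qed
qed

end



context fsg
begin

lemma zero_unique: "is_zero A m z1 \<Longrightarrow> is_zero A m z2 \<Longrightarrow> z1 = z2"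
  unfolding is_zero_def by metis

lemma zero_mul: "is_zero A m z \<Longrightarrow> x\<in>A \<Longrightarrow> m x z = z \<and> m z x = z"
  unfolding is_zero_def by auto

definition CL where "CL s t \<longleftrightarrow> (\<forall>x\<in>A. m (m x s) (m x s) = m x s \<longrightarrow> m (m x s) (m x t) = m x s)"
definition CR where "CR s t \<longleftrightarrow> (\<forall>y\<in>A. m (m s y) (m s y) = m s y \<longrightarrow> m (m t y) (m s y) = m s y)"

end

locale dsg = fsg +
  fixes I assumes dI: "distinguished_ideal A m I"
begin

lemma Iideal: "is_ideal A m I"
  using dI unfolding distinguished_ideal_def zero_minimal_ideal_def minimal_ideal_def
  by (auto split: if_splits)

lemma IA: "I \<subseteq> A" using Iideal unfolding is_ideal_def by auto
lemma IAx[simp,intro]: "x \<in> I \<Longrightarrow> x \<in> A" using IA by auto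
lemma ImulR[simp,intro]: "x\<in>I \<Longrightarrow> s\<in>A \<Longrightarrow> m x s \<in> I" using Iideal unfolding is_ideal_def by auto
lemma ImulL[simp,intro]: "x\<in>I \<Longrightarrow> s\<in>A \<Longrightarrow> m s x \<in> I" using Iideal unfolding is_ideal_def by auto

lemma Imin: assumes "is_ideal A m J" "J \<subseteq> I" "a\<in>J" "\<not> is_zero A m a" shows "J = I"
proof (cases "\<exists>z. is_zero A m z")
  case True
  then obtain z where z: "is_zero A m z" "zero_minimal_ideal A m z I"
    using dI unfolding distinguished_ideal_def by auto
  hence "J = {z} \<or> J = I" using assms unfolding zero_minimal_ideal_def by auto
  moreover have "J \<noteq> {z}" using assms z by auto
  ultimately show ?thesis by auto
next
  case False
  hence "minimal_ideal A m I" using dI unfolding distinguished_ideal_def by auto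
  then show ?thesis using assms unfolding minimal_ideal_def by auto
qed

lemma Inz: "\<exists>a\<in>I. \<not> is_zero A m a"
proof (cases "\<exists>z. is_zero A m z")
  case True
  then obtain z where z: "is_zero A m z" "zero_minimal_ideal A m z I"
    using dI unfolding distinguished_ideal_def by auto
  hence "I \<noteq> {z}" "I \<noteq> {}" unfolding zero_minimal_ideal_def is_ideal_def by auto
  then obtain a where "a \<in> I" "a \<noteq> z" by auto
  then show ?thesis using z zero_unique by blast
next
  case False
  then show ?thesis using Iideal unfolding is_ideal_def by auto
qed

lemma gen: assumes a: "a\<in>I" "\<not> is_zero A m a" and x: "x\<in>I"
  shows "x = a \<or> (\<exists>u\<in>A. x = m u a) \<or> (\<exists>v\<in>A. x = m a v) \<or> (\<exists>u\<in>A. \<exists>v\<in>A. x = m (m u a) v)"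
proof -
  define J where "J = {x\<in>A. x = a \<or> (\<exists>u\<in>A. x = m u a) \<or> (\<exists>v\<in>A. x = m a v) \<or> (\<exists>u\<in>A. \<exists>v\<in>A. x = m (m u a) v)}"
  have aA: "a \<in> A" using a by auto
  have aJ: "a \<in> J" using aA unfolding J_def by auto
  have "is_ideal A m J"
    unfolding is_ideal_def
  proof (intro conjI ballI)
    show "J \<noteq> {}" using aJ by auto
    show "J \<subseteq> A" unfolding J_def by auto
  next
    fix s x assume s: "s\<in>A" and x: "x\<in>J"
    show "m s x \<in> J"
      using x s aA unfolding J_def
      by (auto simp: assoc) (metis assoc cl)+
    show "m x s \<in> J"
      using x s aA unfolding J_def
      by (auto simp: assoc) (metis assoc cl)+
  qed
  moreover have "J \<subseteq> I" unfolding J_def using a by auto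
  ultimately have "J = I" using Imin aJ a by blast
  then show ?thesis using x unfolding J_def by auto
qed

lemma stabL: assumes x: "x\<in>I" "\<not> is_zero A m x" and s: "s\<in>A" and sx: "\<not> is_zero A m (m s x)"
  shows "\<exists>z\<in>A. x = m z (m s x)"
proof -
  have xA: "x\<in>A" using x by auto
  from gen[OF _ sx x(1)] x s
  consider "x = m s x" | "\<exists>u\<in>A. x = m u (m s x)" | "\<exists>v\<in>A. x = m (m s x) v"
    | "\<exists>u\<in>A. \<exists>v\<in>A. x = m (m u (m s x)) v" by auto
  then show ?thesis
  proof cases
    case 1 then show ?thesis using s by (intro bexI[of _ s]) auto
  next
    case 2 then show ?thesis by auto
  next
    case 3
    then obtain v where v: "v\<in>A" "x = m (m s x) v" by auto
    show ?thesis using LL[OF s v(1) xA v(2)] .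
  next
    case 4
    then obtain u v where uv: "u\<in>A" "v\<in>A" "x = m (m u (m s x)) v" by auto
    hence "x = m (m (m u s) x) v" using s xA by (simp add: assoc)
    then obtain z where z: "z\<in>A" "x = m z (m (m u s) x)" using LL[of "m u s" v x] uv s xA by auto
    then show ?thesis using uv s xA by (intro bexI[of _ "m z u"]) (auto simp: assoc)
  qed
qed

lemma stabR: assumes x: "x\<in>I" "\<not> is_zero A m x" and s: "s\<in>A" and sx: "\<not> is_zero A m (m x s)"
  shows "\<exists>z\<in>A. x = m (m x s) z"
proof -
  have xA: "x\<in>A" using x by auto
  from gen[OF _ sx x(1)] x s
  consider "x = m x s" | "\<exists>u\<in>A. x = m u (m x s)" | "\<exists>v\<in>A. x = m (m x s) v"
    | "\<exists>u\<in>A. \<exists>v\<in>A. x = m (m u (m x s)) v" by auto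
  then show ?thesis
  proof cases
    case 1 then show ?thesis using s xA by (intro bexI[of _ s]) (auto simp: assoc)
  next
    case 2
    then obtain u where u: "u\<in>A" "x = m u (m x s)" by auto
    hence "x = m (m u x) s" using s xA by (simp add: assoc)
    then show ?thesis using LR[OF u(1) s xA] by auto
  next
    case 3 then show ?thesis by auto
  next
    case 4
    then obtain u v where uv: "u\<in>A" "v\<in>A" "x = m (m u (m x s)) v" by auto
    hence "x = m (m u x) (m s v)" using s xA by (simp add: assoc)
    then obtain z where z: "z\<in>A" "x = m (m x (m s v)) z" using LR[of u "m s v" x] uv s xA by auto
    then show ?thesis using uv s xA by (intro bexI[of _ "m v z"]) (auto simp: assoc)
  qed
qed

lemma pw_I: "y\<in>I \<Longrightarrow> pw m y k \<in> I" by (induction k) auto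

lemma idem_from_nonnull: assumes "b\<in>I" "c\<in>I" "\<not> is_zero A m (m b c)"
  shows "\<exists>f\<in>I. m f f = f \<and> \<not> is_zero A m f"
proof -
  have bA: "b\<in>A" "c\<in>A" using assms by auto
  have bnz: "\<not> is_zero A m b" using assms bA zero_mul by metis
  obtain z where z: "z\<in>A" "b = m (m b c) z" using stabR[OF assms(1) bnz bA(2) assms(3)] by auto
  define y where "y = m c z"
  have yI: "y\<in>I" unfolding y_def using assms z by auto
  have by1: "b = m b y" using z bA unfolding y_def by (simp add: assoc)
  have byk: "b = m b (pw m y k)" for k
  proof (induction k)
    case 0 then show ?case using by1 by simp
  next
    case (Suc k)
    have "m b (pw m y (Suc k)) = m (m b (pw m y k)) y" using yI bA by (simp add: assoc)
    then show ?case using Suc by1 by simp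
  qed
  obtain k where k: "m (pw m y k) (pw m y k) = pw m y k" using idem_pow yI by blast
  have "\<not> is_zero A m (pw m y k)"
  proof
    assume "is_zero A m (pw m y k)"
    hence "m b (pw m y k) = pw m y k" using zero_mul bA by blast
    hence "b = pw m y k" using byk by simp
    thus False using bnz \<open>is_zero A m (pw m y k)\<close> by simp
  qed
  then show ?thesis using k pw_I[OF yI] by blast
qed

lemma reg: assumes f: "f\<in>I" "m f f = f" "\<not> is_zero A m f" and a: "a\<in>I" "\<not> is_zero A m a"
  shows "\<exists>a'\<in>A. m (m a a') a = a"
proof -
  have fA: "f\<in>A" using f by auto
  have "\<exists>u\<in>A. \<exists>v\<in>A. a = m (m u f) v"
  proof -
    from gen[OF f(1) f(3) a(1)]
    consider "a = f" | "\<exists>u\<in>A. a = m u f" | "\<exists>v\<in>A. a = m f v"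
      | "\<exists>u\<in>A. \<exists>v\<in>A. a = m (m u f) v" by auto
    then show ?thesis
    proof cases
      case 1 then show ?thesis using f fA by (metis)
    next
      case 2 then show ?thesis using f fA by (metis assoc)
    next
      case 3 then show ?thesis using f fA by (metis)
    next
      case 4 then show ?thesis .
    qed
  qed
  then obtain u v where uv: "u\<in>A" "v\<in>A" "a = m (m u f) v" by auto
  have aA: "a\<in>A" using a by auto
  have ufnz: "\<not> is_zero A m (m u f)"
    using uv a zero_mul by (metis cl fA)
  have fvnz: "\<not> is_zero A m (m f v)"
  proof
    assume "is_zero A m (m f v)"
    hence "a = m f v" using uv fA zero_mul by (simp add: assoc)
    thus False using a \<open>is_zero A m (m f v)\<close> by simp
  qed
  obtain z1 where z1: "z1\<in>A" "f = m z1 (m u f)" using stabL[OF f(1) f(3) uv(1) ufnz] by auto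
  obtain z2 where z2: "z2\<in>A" "f = m (m f v) z2" using stabR[OF f(1) f(3) uv(2) fvnz] by auto
  define a' where "a' = m (m z2 f) z1"
  have a'A: "a'\<in>A" unfolding a'_def using z1 z2 fA by auto
  have "m (m a a') a = m (m u (m (m (m f v) z2) (m f (m z1 (m u f))))) v"
    unfolding a'_def uv(3) using uv(1,2) z1(1) z2(1) fA by (simp add: assoc)
  also have "\<dots> = m (m u (m f (m f f))) v" by (simp only: z1(2)[symmetric] z2(2)[symmetric])
  also have "\<dots> = a" using f uv by simp
  finally show ?thesis using a'A by blast
qed

end



locale dsgf = dsg +
  assumes fex: "\<exists>f\<in>I. m f f = f \<and> \<not> is_zero A m f"
begin

lemma regI: "a\<in>I \<Longrightarrow> \<not> is_zero A m a \<Longrightarrow> \<exists>a'\<in>A. m (m a a') a = a"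
  using fex reg by blast

lemma halfLL: assumes st: "s\<in>A" "t\<in>A" "CL s t" and x: "x\<in>I" and nz: "\<not> is_zero A m (m x s)"
  shows "\<exists>u\<in>A. m x s = m u (m x t)"
proof -
  define w where "w = m x s"
  have xA: "x\<in>A" using x by auto
  have wI: "w\<in>I" unfolding w_def using x st by auto
  hence wA: "w\<in>A" by auto
  obtain w' where w': "w'\<in>A" "m (m w w') w = w" using regI[OF wI] nz unfolding w_def by auto
  define e where "e = m w' w"
  have eA: "e\<in>A" unfolding e_def using w' wA by auto
  have he: "e = m (m w' x) s" unfolding e_def w_def using w' xA st by (simp add: assoc)
  have ee: "m e e = e"
  proof -
    have "m e e = m w' (m (m w w') w)" unfolding e_def using w'(1) wA by (simp add: assoc)
    also have "\<dots> = e" using w' unfolding e_def by simp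
    finally show ?thesis .
  qed
  have c: "m e (m (m w' x) t) = e"
    using st(3) w'(1) xA ee he unfolding CL_def by (metis cl)
  have we: "m w e = w" unfolding e_def using w' wA by (simp add: assoc)
  have "w = m w (m e (m (m w' x) t))" using we c by simp
  also have "\<dots> = m (m (m w e) w') (m x t)" using wA eA w' xA st by (simp add: assoc)
  finally show ?thesis unfolding w_def using wA eA w' by (intro bexI[of _ "m (m w e) w'"]) (auto simp: w_def)
qed

lemma halfRR: assumes st: "s\<in>A" "t\<in>A" "CR s t" and x: "x\<in>I" and nz: "\<not> is_zero A m (m s x)"
  shows "\<exists>u\<in>A. m s x = m (m t x) u"
proof -
  define w where "w = m s x"
  have xA: "x\<in>A" using x by auto
  have wI: "w\<in>I" unfolding w_def using x st by auto
  hence wA: "w\<in>A" by auto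
  obtain w' where w': "w'\<in>A" "m (m w w') w = w" using regI[OF wI] nz unfolding w_def by auto
  define e where "e = m w w'"
  have eA: "e\<in>A" unfolding e_def using w' wA by auto
  have he: "e = m s (m x w')" unfolding e_def w_def using w' xA st by (simp add: assoc)
  have ee: "m e e = e"
  proof -
    have "m e e = m (m (m w w') w) w'" unfolding e_def using w'(1) wA by (simp add: assoc)
    also have "\<dots> = e" using w' unfolding e_def by simp
    finally show ?thesis .
  qed
  have c: "m (m t (m x w')) e = e"
    using st(3) w'(1) xA ee he unfolding CR_def by (metis cl)
  have we: "m e w = w" unfolding e_def using w' wA by (simp add: assoc)
  have "w = m (m (m t (m x w')) e) w" using we c by simp
  also have "\<dots> = m (m t x) (m w' (m e w))" using wA eA w' xA st by (simp add: assoc)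
  finally show ?thesis unfolding w_def using wA eA w' by (intro bexI[of _ "m w' (m e w)"]) (auto simp: w_def)
qed

lemma gmL: assumes st: "s\<in>A" "t\<in>A" "CR s t" and x: "x\<in>I" and nz: "\<not> is_zero A m (m s x)"
  shows "m t x = m s x"
proof -
  define w where "w = m s x"
  have xA: "x\<in>A" using x by auto
  have xnz: "\<not> is_zero A m x" using nz zero_mul st by metis
  have wI: "w\<in>I" unfolding w_def using x st by auto
  hence wA: "w\<in>A" by auto
  obtain w' where w': "w'\<in>A" "m (m w w') w = w" using regI[OF wI] nz unfolding w_def by auto
  define e where "e = m w w'"
  have eA: "e\<in>A" unfolding e_def using w' wA by auto
  have he: "e = m s (m x w')" unfolding e_def w_def using w' xA st by (simp add: assoc)
  have ee: "m e e = e"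
  proof -
    have "m e e = m (m (m w w') w) w'" unfolding e_def using w'(1) wA by (simp add: assoc)
    also have "\<dots> = e" using w' unfolding e_def by simp
    finally show ?thesis .
  qed
  have c: "m (m t (m x w')) e = e"
    using st(3) w'(1) xA ee he unfolding CR_def by (metis cl)
  have "m (m (m t (m x w')) e) w = m e w" using c by simp
  hence c2: "m (m t x) (m w' w) = w"
    unfolding e_def using w' wA xA st by (simp add: assoc)
  obtain z where z: "z\<in>A" "x = m z w" using stabL[OF x xnz st(1) nz] unfolding w_def by auto
  have "m x (m w' w) = m z (m (m w w') w)" using z w' wA by (simp add: assoc)
  hence xw: "m x (m w' w) = x" using w' z by simp
  have "m t x = m t (m x (m w' w))" using xw by simp
  also have "\<dots> = w" using c2 st w' wA xA by (simp add: assoc)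
  finally show ?thesis unfolding w_def .
qed

lemma gmR: assumes st: "s\<in>A" "t\<in>A" "CL s t" and x: "x\<in>I" and nz: "\<not> is_zero A m (m x s)"
  shows "m x t = m x s"
proof -
  define w where "w = m x s"
  have xA: "x\<in>A" using x by auto
  have xnz: "\<not> is_zero A m x" using nz zero_mul st by metis
  have wI: "w\<in>I" unfolding w_def using x st by auto
  hence wA: "w\<in>A" by auto
  obtain w' where w': "w'\<in>A" "m (m w w') w = w" using regI[OF wI] nz unfolding w_def by auto
  define e where "e = m w' w"
  have eA: "e\<in>A" unfolding e_def using w' wA by auto
  have he: "e = m (m w' x) s" unfolding e_def w_def using w' xA st by (simp add: assoc)
  have ee: "m e e = e"
  proof -
    have "m e e = m w' (m (m w w') w)" unfolding e_def using w'(1) wA by (simp add: assoc)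
    also have "\<dots> = e" using w' unfolding e_def by simp
    finally show ?thesis .
  qed
  have c: "m e (m (m w' x) t) = e"
    using st(3) w'(1) xA ee he unfolding CL_def by (metis cl)
  have c2: "m (m w w') (m x t) = w"
  proof -
    have "m (m w w') (m x t) = m w (m w' (m x t))" using w'(1) wA xA st by (simp add: assoc)
    also have "\<dots> = m (m (m w w') w) (m w' (m x t))" by (simp only: w'(2))
    also have "\<dots> = m w (m e (m (m w' x) t))" unfolding e_def using w'(1) wA xA st by (simp add: assoc)
    also have "\<dots> = m w e" using c by simp
    also have "\<dots> = w" unfolding e_def using w' wA by (metis assoc)
    finally show ?thesis .
  qed
  obtain z where z: "z\<in>A" "x = m w z" using stabR[OF x xnz st(1) nz] unfolding w_def by (auto simp: w_def)
  have "m (m w w') x = m (m (m w w') w) z" using z(1) w'(1) wA by (subst z(2)) (simp add: assoc)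
  hence xw: "m (m w w') x = x" using w' z by simp
  have "m x t = m (m (m w w') x) t" using xw by simp
  also have "\<dots> = w" using c2 st w' wA xA by (simp add: assoc)
  finally show ?thesis unfolding w_def .
qed

lemma Lfin: assumes "s\<in>A" "t\<in>A" "CL s t" "CL t s" "x\<in>I" shows "Lrel A m (m x s) (m x t)"
proof -
  have A: "m x s \<in> A" "m x t \<in> A" using assms by auto
  consider "\<not> is_zero A m (m x s)" "\<not> is_zero A m (m x t)" | "is_zero A m (m x s)" "is_zero A m (m x t)"
    | "\<not> is_zero A m (m x s)" "is_zero A m (m x t)" | "is_zero A m (m x s)" "\<not> is_zero A m (m x t)" by blast
  then show ?thesis
  proof cases
    case 1 then show ?thesis using halfLL[of s t x] halfLL[of t s x] assms A unfolding Lrel_def by blast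
  next
    case 2 then show ?thesis using zero_unique A unfolding Lrel_def by blast
  next
    case 3 then obtain u where "u\<in>A" "m x s = m u (m x t)" using halfLL[of s t x] assms by blast
    then show ?thesis using 3 zero_mul by metis
  next
    case 4 then obtain u where "u\<in>A" "m x t = m u (m x s)" using halfLL[of t s x] assms by blast
    then show ?thesis using 4 zero_mul by metis
  qed
qed

lemma Rfin: assumes "s\<in>A" "t\<in>A" "CR s t" "CR t s" "x\<in>I" shows "Rrel A m (m s x) (m t x)"
proof -
  have A: "m s x \<in> A" "m t x \<in> A" using assms by auto
  consider "\<not> is_zero A m (m s x)" "\<not> is_zero A m (m t x)" | "is_zero A m (m s x)" "is_zero A m (m t x)"
    | "\<not> is_zero A m (m s x)" "is_zero A m (m t x)" | "is_zero A m (m s x)" "\<not> is_zero A m (m t x)" by blast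
  then show ?thesis
  proof cases
    case 1 then show ?thesis using halfRR[of s t x] halfRR[of t s x] assms A unfolding Rrel_def by blast
  next
    case 2 then show ?thesis using zero_unique A unfolding Rrel_def by blast
  next
    case 3 then obtain u where "u\<in>A" "m s x = m (m t x) u" using halfRR[of s t x] assms by blast
    then show ?thesis using 3 zero_mul by metis
  next
    case 4 then obtain u where "u\<in>A" "m t x = m (m s x) u" using halfRR[of t s x] assms by blast
    then show ?thesis using 4 zero_mul by metis
  qed
qed

lemma GLfin: assumes "s\<in>A" "t\<in>A" "CR s t" "CR t s" "x\<in>I" shows "m s x = m t x"
  using gmL[of s t x] gmL[of t s x] assms zero_unique by (metis IAx cl)

lemma GRfin: assumes "s\<in>A" "t\<in>A" "CL s t" "CL t s" "x\<in>I" shows "m x s = m x t"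
  using gmR[of s t x] gmR[of t s x] assms zero_unique by (metis IAx cl)

end

lemma main_alg: fixes A :: "nat set"
  assumes sg: "sgrp A m" and sst: "semisimple_type A m" and st: "s\<in>A" "t\<in>A"
  and c: "fsg.CL A m s t" "fsg.CL A m t s" "fsg.CR A m s t" "fsg.CR A m t s"
  shows "s = t"
proof -
  interpret fsg A m using sg by unfold_locales
  consider "left_letter_mapping A m" | "right_letter_mapping A m" | "group_mapping A m"
    using sst unfolding semisimple_type_def by blast
  then show ?thesis
  proof cases
    case 1
    then obtain I where I: "distinguished_ideal A m I"
      and fa: "\<forall>s\<in>A. \<forall>t\<in>A. (\<forall>x\<in>I. Lrel A m (m x s) (m x t)) \<longrightarrow> s = t"
      unfolding left_letter_mapping_def by blast
    interpret dsg A m I using I by unfold_locales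
    have "\<exists>b\<in>I. \<exists>c\<in>I. \<not> is_zero A m (m b c)"
    proof (rule ccontr)
      assume H: "\<not> ?thesis"
      obtain a where a: "a\<in>I" "\<not> is_zero A m a" using Inz by blast
      have z: "is_zero A m (m a a)" using H a by blast
      have "\<forall>x\<in>I. Lrel A m (m x a) (m x (m a a))"
        using H z zero_unique zero_mul a unfolding Lrel_def by (metis IAx cl)
      hence "a = m a a" using fa a by auto
      thus False using a z by simp
    qed
    then interpret dsgf A m I using idem_from_nonnull by unfold_locales blast
    show ?thesis using fa st Lfin c by blast
  next
    case 2
    then obtain I where I: "distinguished_ideal A m I"
      and fa: "\<forall>s\<in>A. \<forall>t\<in>A. (\<forall>x\<in>I. Rrel A m (m s x) (m t x)) \<longrightarrow> s = t"
      unfolding right_letter_mapping_def by blast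
    interpret dsg A m I using I by unfold_locales
    have "\<exists>b\<in>I. \<exists>c\<in>I. \<not> is_zero A m (m b c)"
    proof (rule ccontr)
      assume H: "\<not> ?thesis"
      obtain a where a: "a\<in>I" "\<not> is_zero A m a" using Inz by blast
      have z: "is_zero A m (m a a)" using H a by blast
      have "\<forall>x\<in>I. Rrel A m (m a x) (m (m a a) x)"
        using H z zero_unique zero_mul a unfolding Rrel_def by (metis IAx cl)
      hence "a = m a a" using fa a by auto
      thus False using a z by simp
    qed
    then interpret dsgf A m I using idem_from_nonnull by unfold_locales blast
    show ?thesis using fa st Rfin c by blast
  next
    case 3
    then obtain I G where I: "distinguished_ideal A m I"
      and G: "maximal_subgroup A m G" "G \<subseteq> I" "card G > 1"
      and fa: "\<forall>s\<in>A. \<forall>t\<in>A. (\<forall>x\<in>I. m s x = m t x) \<longrightarrow> s = t"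
      unfolding group_mapping_def by blast
    interpret dsg A m I using I by unfold_locales
    have sgG: "is_subgroup A m G" using G(1) unfolding maximal_subgroup_def by simp
    obtain e where e: "e\<in>G" "\<forall>g\<in>G. m e g = g \<and> m g e = g"
      using sgG unfolding is_subgroup_def by blast
    have "\<not> is_zero A m e"
    proof
      assume z: "is_zero A m e"
      have "G \<subseteq> A" using G IA by auto
      hence "\<forall>g\<in>G. g = e" using e z zero_mul by (metis subsetD)
      hence "G \<subseteq> {e}" by auto
      hence "card G \<le> card {e}" by (intro card_mono) auto
      thus False using G by simp
    qed
    then interpret dsgf A m I using e G by unfold_locales blast
    show ?thesis using fa st GLfin c by blast
  qed
qed




lemma hom_pw: "hom R p A m \<psi> \<Longrightarrow> sgrp R p \<Longrightarrow> a\<in>R \<Longrightarrow> \<psi> (pw p a k) = pw m (\<psi> a) k"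
proof (induction k)
  case 0 then show ?case by simp
next
  case (Suc k)
  interpret fsg R p by unfold_locales (rule Suc.prems)
  show ?case using Suc unfolding hom_def by simp
qed

lemma lift:
  assumes sR: "sgrp R p" and sA: "sgrp A m" and hp: "hom R p A m \<psi>" and on: "\<psi> ` R = A"
    and hf: "hom R p B n \<phi>"
    and om: "\<forall>x\<in>R. \<forall>y\<in>R. \<phi> x = \<phi> y \<longrightarrow> n (\<phi> x) (\<phi> x) = \<phi> x \<longrightarrow> x = y"
    and r: "r\<in>R" "r'\<in>R" "\<phi> r = \<phi> r'"
  shows "fsg.CL A m (\<psi> r) (\<psi> r') \<and> fsg.CR A m (\<psi> r) (\<psi> r')"
proof -
  interpret Rs: fsg R p by unfold_locales (rule sR)
  interpret As: fsg A m by unfold_locales (rule sA)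
  have hpm: "\<And>x y. x\<in>R \<Longrightarrow> y\<in>R \<Longrightarrow> \<psi> (p x y) = m (\<psi> x) (\<psi> y)"
    and hpA: "\<And>x. x\<in>R \<Longrightarrow> \<psi> x \<in> A" using hp unfolding hom_def by auto
  have hfm: "\<And>x y. x\<in>R \<Longrightarrow> y\<in>R \<Longrightarrow> \<phi> (p x y) = n (\<phi> x) (\<phi> y)" using hf unfolding hom_def by auto
  have key: "p c r' = p c r" if c: "c\<in>R" and id: "p (p c r) (p c r) = p c r" for c
  proof -
    have "\<phi> (p c r) = \<phi> (p c r')" using hfm c r by simp
    moreover have "n (\<phi> (p c r)) (\<phi> (p c r)) = \<phi> (p c r)" using hfm[of "p c r" "p c r"] c r id by simp
    ultimately show ?thesis using om c r by (metis Rs.cl)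
  qed
  have key2: "p r' c = p r c" if c: "c\<in>R" and id: "p (p r c) (p r c) = p r c" for c
  proof -
    have "\<phi> (p r c) = \<phi> (p r' c)" using hfm c r by simp
    moreover have "n (\<phi> (p r c)) (\<phi> (p r c)) = \<phi> (p r c)" using hfm[of "p r c" "p r c"] c r id by simp
    ultimately show ?thesis using om c r by (metis Rs.cl)
  qed
  define s t where "s = \<psi> r" and "t = \<psi> r'"
  have st: "s\<in>A" "t\<in>A" unfolding s_def t_def using hpA r by auto
  have CL: "As.CL s t" unfolding As.CL_def
  proof (intro ballI impI)
    fix x assume x: "x\<in>A" and e: "m (m x s) (m x s) = m x s"
    obtain u where u: "u\<in>R" "\<psi> u = x" using on x by auto
    define a where "a = p u r"
    have aR: "a\<in>R" unfolding a_def using u r by auto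
    have pa: "\<psi> a = m x s" unfolding a_def s_def using hpm u r by simp
    obtain k where k: "p (pw p a k) (pw p a k) = pw p a k" using Rs.idem_pow aR by blast
    define c where "c = p (pw p a (k+k)) u"
    have cR: "c\<in>R" unfolding c_def using aR u by auto
    have "p c r = pw p a (Suc (k+k))" unfolding c_def a_def using aR u r by (simp add: Rs.assoc a_def)
    also have "\<dots> = pw p a k" using Rs.pw_add[OF aR, of k k] k by simp
    finally have cr: "p c r = pw p a k" .
    have "p c r' = pw p a k" using key[OF cR] cr k by simp
    hence "\<psi> (p c r') = pw m (\<psi> a) k" using hom_pw[OF hp sR aR] by simp
    hence "m (\<psi> c) t = m x s" using hpm cR r pa As.idem_pw_eq[of "m x s" k] e x st
      unfolding t_def by simp
    moreover have "\<psi> c = m (m x s) x" unfolding c_def using hpm aR u hom_pw[OF hp sR aR] pa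
      As.idem_pw_eq[of "m x s" "k+k"] e x st by simp
    ultimately show "m (m x s) (m x t) = m x s" using x st by (simp add: As.assoc)
  qed
  have CR: "As.CR s t" unfolding As.CR_def
  proof (intro ballI impI)
    fix y assume y: "y\<in>A" and e: "m (m s y) (m s y) = m s y"
    obtain v where v: "v\<in>R" "\<psi> v = y" using on y by auto
    define a where "a = p r v"
    have aR: "a\<in>R" unfolding a_def using v r by auto
    have pa: "\<psi> a = m s y" unfolding a_def s_def using hpm v r by simp
    obtain k where k: "p (pw p a k) (pw p a k) = pw p a k" using Rs.idem_pow aR by blast
    define c where "c = p v (pw p a (k+k))"
    have cR: "c\<in>R" unfolding c_def using aR v by auto
    have "p r c = pw p a (Suc (k+k))" unfolding c_def using aR v r
      by (simp only: Rs.pw_left[OF aR]) (simp add: Rs.assoc a_def)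
    also have "\<dots> = pw p a k" using Rs.pw_add[OF aR, of k k] k by simp
    finally have cr: "p r c = pw p a k" .
    have "p r' c = pw p a k" using key2[OF cR] cr k by simp
    hence "\<psi> (p r' c) = pw m (\<psi> a) k" using hom_pw[OF hp sR aR] by simp
    hence "m t (\<psi> c) = m s y" using hpm cR r pa As.idem_pw_eq[of "m s y" k] e y st
      unfolding t_def by simp
    moreover have "\<psi> c = m y (m s y)" unfolding c_def using hpm aR v hom_pw[OF hp sR aR] pa
      As.idem_pw_eq[of "m s y" "k+k"] e y st by simp
    ultimately show "m (m t y) (m s y) = m s y" using y st by (simp add: As.assoc)
  qed
  show ?thesis using CL CR unfolding s_def t_def by simp
qed

lemma factor:
  fixes A :: "nat set"
  assumes sR: "sgrp R p" and sA: "sgrp A m" and sst: "semisimple_type A m"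
    and hp: "hom R p A m \<psi>" and on: "\<psi> ` R = A"
    and hf: "hom R p B n \<phi>"
    and om: "\<forall>x\<in>R. \<forall>y\<in>R. \<phi> x = \<phi> y \<longrightarrow> n (\<phi> x) (\<phi> x) = \<phi> x \<longrightarrow> x = y"
    and r: "r\<in>R" "r'\<in>R" "\<phi> r = \<phi> r'"
  shows "\<psi> r = \<psi> r'"
proof -
  have 1: "fsg.CL A m (\<psi> r) (\<psi> r') \<and> fsg.CR A m (\<psi> r) (\<psi> r')"
    using lift[OF sR sA hp on hf om r] .
  have 2: "fsg.CL A m (\<psi> r') (\<psi> r) \<and> fsg.CR A m (\<psi> r') (\<psi> r)"
    using lift[OF sR sA hp on hf om r(2) r(1)] r(3) by simp
  have "\<psi> r \<in> A" "\<psi> r' \<in> A" using hp r unfolding hom_def by auto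
  then show ?thesis using main_alg[OF sA sst] 1 2 by blast
qed




lemma pv_sg: "pseudovariety V \<Longrightarrow> V \<subseteq> {S. is_sg S}" unfolding pseudovariety_def by auto
lemma pv_subI: "pseudovariety V \<Longrightarrow> (A, m) \<in> V \<Longrightarrow> B \<subseteq> A \<Longrightarrow> sgrp B m \<Longrightarrow> (B, m) \<in> V"
  unfolding pseudovariety_def by blast
lemma pv_homI: "pseudovariety V \<Longrightarrow> (A, m) \<in> V \<Longrightarrow> sgrp B n \<Longrightarrow> hom A m B n h \<Longrightarrow> h ` A = B \<Longrightarrow> (B, n) \<in> V"
  unfolding pseudovariety_def by blast
lemma pv_prodI: "pseudovariety V \<Longrightarrow> S \<in> V \<Longrightarrow> T \<in> V \<Longrightarrow> prod_sg S T \<in> V"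
  unfolding pseudovariety_def by blast

lemma sgrp_single: "n b b = b \<Longrightarrow> sgrp {b} n" unfolding sgrp_def by auto

lemma triv_in: assumes V: "pseudovariety V" and B: "sgrp B n" "card B = 1" shows "(B, n) \<in> V"
proof -
  obtain b where b: "B = {b}" using B(2) card_1_singletonE by blast
  obtain S where S: "S \<in> V" using V unfolding pseudovariety_def by blast
  obtain A m where Am: "S = (A, m)" by (cases S)
  have "sgrp A m" using pv_sg[OF V] S Am unfolding is_sg_def by auto
  hence "A \<noteq> {}" unfolding sgrp_def by auto
  moreover have "n b b = b" using B b unfolding sgrp_def by auto
  ultimately have "hom A m B n (\<lambda>_. b)" "(\<lambda>_. b) ` A = B" unfolding hom_def b by auto
  then show ?thesis using pv_homI[of V A m B n "\<lambda>_. b"] V S Am B by blast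
qed

definition T0 :: sg where "T0 = ({0}, \<lambda>_ _. 0)"

lemma T0_sg: "is_sg T0" unfolding T0_def is_sg_def by (simp add: sgrp_single)

lemma T0_in: "pseudovariety V \<Longrightarrow> T0 \<in> V"
  unfolding T0_def by (rule triv_in) (auto simp: sgrp_single)

lemma prod_is_sg: assumes "is_sg S" "is_sg T" shows "is_sg (prod_sg S T)"
proof -
  obtain A m B n where S: "S = (A,m)" and T: "T = (B,n)" by (cases S, cases T)
  have sA: "sgrp A m" and sB: "sgrp B n" using assms S T unfolding is_sg_def by auto
  have fin: "finite (prod_encode ` (A \<times> B))" using sA sB unfolding sgrp_def by auto
  have ne: "prod_encode ` (A \<times> B) \<noteq> {}" using sA sB unfolding sgrp_def by auto
  have cl: "\<forall>x\<in>prod_encode ` (A \<times> B). \<forall>y\<in>prod_encode ` (A \<times> B).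
      prod_encode (m (fst (prod_decode x)) (fst (prod_decode y)), n (snd (prod_decode x)) (snd (prod_decode y)))
        \<in> prod_encode ` (A \<times> B)"
  proof (intro ballI)
    fix x y assume "x \<in> prod_encode ` (A \<times> B)" "y \<in> prod_encode ` (A \<times> B)"
    then obtain a b c d where "x = prod_encode (a,b)" "y = prod_encode (c,d)" "a\<in>A" "b\<in>B" "c\<in>A" "d\<in>B" by auto
    then show "prod_encode (m (fst (prod_decode x)) (fst (prod_decode y)), n (snd (prod_decode x)) (snd (prod_decode y)))
        \<in> prod_encode ` (A \<times> B)" using sA sB unfolding sgrp_def by auto
  qed
  have aA: "\<And>a b c. a\<in>A \<Longrightarrow> b\<in>A \<Longrightarrow> c\<in>A \<Longrightarrow> m (m a b) c = m a (m b c)"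
    and aB: "\<And>a b c. a\<in>B \<Longrightarrow> b\<in>B \<Longrightarrow> c\<in>B \<Longrightarrow> n (n a b) c = n a (n b c)"
    using sA sB unfolding sgrp_def by blast+
  have as: "\<forall>x\<in>prod_encode ` (A \<times> B). \<forall>y\<in>prod_encode ` (A \<times> B). \<forall>z\<in>prod_encode ` (A \<times> B).
      prod_encode (m (fst (prod_decode (prod_encode (m (fst (prod_decode x)) (fst (prod_decode y)), n (snd (prod_decode x)) (snd (prod_decode y)))))) (fst (prod_decode z)),
                   n (snd (prod_decode (prod_encode (m (fst (prod_decode x)) (fst (prod_decode y)), n (snd (prod_decode x)) (snd (prod_decode y)))))) (snd (prod_decode z)))
    = prod_encode (m (fst (prod_decode x)) (fst (prod_decode (prod_encode (m (fst (prod_decode y)) (fst (prod_decode z)), n (snd (prod_decode y)) (snd (prod_decode z)))))),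
                   n (snd (prod_decode x)) (snd (prod_decode (prod_encode (m (fst (prod_decode y)) (fst (prod_decode z)), n (snd (prod_decode y)) (snd (prod_decode z)))))))"
    using aA aB by (auto simp: aA aB)
  show ?thesis unfolding S T is_sg_def prod_sg_def sgrp_def fst_conv snd_conv
    using fin ne cl as by blast
qed

lemma pv_univ: "pseudovariety {S. is_sg S}"
  unfolding pseudovariety_def
proof (intro conjI allI impI ballI)
  show "{S. is_sg S} \<noteq> {}" using T0_sg unfolding T0_def by auto
  fix S T assume "S \<in> {S. is_sg S}" "T \<in> {S. is_sg S}"
  then show "prod_sg S T \<in> {S. is_sg S}" using prod_is_sg by simp
next
  fix A B :: "nat set" and m assume "sgrp B m"
  then show "(B, m) \<in> {S. is_sg S}" unfolding is_sg_def by simp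
next
  fix A B :: "nat set" and m n h assume "sgrp B n"
  then show "(B, n) \<in> {S. is_sg S}" unfolding is_sg_def by simp
qed simp

lemma pv_Inter: assumes "\<V> \<noteq> {}" "\<forall>V\<in>\<V>. pseudovariety V" shows "pseudovariety (\<Inter>\<V>)"
proof -
  have "T0 \<in> \<Inter>\<V>" using assms T0_in by auto
  show ?thesis unfolding pseudovariety_def
  proof (intro conjI allI impI ballI)
    show "\<Inter>\<V> \<noteq> {}" using \<open>T0 \<in> \<Inter>\<V>\<close> by auto
  next
    fix S assume "S \<in> \<Inter>\<V>"
    then show "is_sg S" using assms pv_sg by blast
  next
    fix S T assume H: "S \<in> \<Inter>\<V>" "T \<in> \<Inter>\<V>"
    show "prod_sg S T \<in> \<Inter>\<V>"
    proof (rule InterI)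
      fix V assume "V \<in> \<V>"
      then show "prod_sg S T \<in> V" using pv_prodI[of V S T] assms(2) H by blast
    qed
  next
    fix A B :: "nat set" and m assume H: "(A, m) \<in> \<Inter>\<V>" "B \<subseteq> A" "sgrp B m"
    show "(B, m) \<in> \<Inter>\<V>"
    proof (rule InterI)
      fix V assume "V \<in> \<V>"
      then show "(B, m) \<in> V" using pv_subI[of V A m B] assms(2) H by blast
    qed
  next
    fix A B :: "nat set" and m n h assume H: "(A, m) \<in> \<Inter>\<V>" "sgrp B n" "hom A m B n h" "h ` A = B"
    show "(B, n) \<in> \<Inter>\<V>"
    proof (rule InterI)
      fix V assume "V \<in> \<V>"
      then show "(B, n) \<in> V" using pv_homI[of V A m B n h] assms(2) H by blast
    qed
  qed
qed

lemma pv_gen_pv: assumes "C \<subseteq> {S. is_sg S}" shows "pseudovariety (pv_gen C)"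
  unfolding pv_gen_def
proof (rule pv_Inter)
  have "{S. is_sg S} \<in> {V. pseudovariety V \<and> C \<subseteq> V}" using pv_univ assms by blast
  then show "{V. pseudovariety V \<and> C \<subseteq> V} \<noteq> {}" by blast
  show "\<forall>V\<in>{V. pseudovariety V \<and> C \<subseteq> V}. pseudovariety V" by blast
qed

lemma pv_gen_sub: "C \<subseteq> pv_gen C" unfolding pv_gen_def by auto

lemma pv_gen_least: "pseudovariety V \<Longrightarrow> C \<subseteq> V \<Longrightarrow> pv_gen C \<subseteq> V" unfolding pv_gen_def by auto


lemma pv1_pv: "is_sg T \<Longrightarrow> pseudovariety (pv_gen1 T)" unfolding pv_gen1_def by (rule pv_gen_pv) auto
lemma pv1_in: "T \<in> pv_gen1 T" unfolding pv_gen1_def using pv_gen_sub by auto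
lemma pv1_least: "pseudovariety V \<Longrightarrow> T \<in> V \<Longrightarrow> pv_gen1 T \<subseteq> V" unfolding pv_gen1_def using pv_gen_least by auto

lemma nontriv:
  assumes S: "is_sg S" and ji: "join_irreducible (pv_gen1 S)" shows "card (fst S) \<noteq> 1"
proof
  assume c: "card (fst S) = 1"
  have "pseudovariety (pv_gen {})" by (rule pv_gen_pv) auto
  hence "S \<in> pv_gen {}" using triv_in[of _ "fst S" "snd S"] S c unfolding is_sg_def by auto
  hence "pv_gen1 S \<subseteq> pv_join {}" unfolding pv_join_def
    using pv1_least \<open>pseudovariety (pv_gen {})\<close> by auto
  then show False using ji unfolding join_irreducible_def by auto
qed

lemma triv_pv_pv: "pseudovariety triv_pv"
  unfolding pseudovariety_def triv_pv_def
proof (intro conjI allI ballI impI)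
  show "{S. is_sg S \<and> card (fst S) = 1} \<noteq> {}" using T0_sg unfolding T0_def by auto
next
  fix S T assume H: "S \<in> {S. is_sg S \<and> card (fst S) = 1}" "T \<in> {S. is_sg S \<and> card (fst S) = 1}"
  then obtain a b where ab: "fst S = {a}" "fst T = {b}" by (auto simp: card_1_singleton_iff)
  have "fst (prod_sg S T) = {prod_encode (a, b)}" unfolding prod_sg_def using ab by simp
  moreover have "is_sg (prod_sg S T)" using H prod_is_sg by simp
  ultimately show "prod_sg S T \<in> {S. is_sg S \<and> card (fst S) = 1}" by simp
next
  fix A B :: "nat set" and m assume H: "(A, m) \<in> {S. is_sg S \<and> card (fst S) = 1}" "B \<subseteq> A" "sgrp B m"
  then obtain a where a: "A = {a}" by (auto simp: card_1_singleton_iff)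
  have "B \<noteq> {}" using H(3) unfolding sgrp_def by simp
  hence "B = {a}" using H(2) a by blast
  then show "(B, m) \<in> {S. is_sg S \<and> card (fst S) = 1}"
    unfolding is_sg_def using H(3) by simp
next
  fix A B :: "nat set" and m n h assume H: "(A, m) \<in> {S. is_sg S \<and> card (fst S) = 1}" "sgrp B n" "hom A m B n h" "h ` A = B"
  then obtain a where "A = {a}" by (auto simp: card_1_singleton_iff)
  hence "B = {h a}" using H(4) by auto
  then show "(B, n) \<in> {S. is_sg S \<and> card (fst S) = 1}"
    unfolding is_sg_def using H(2) by simp
next
  fix x assume "x \<in> {S. is_sg S \<and> card (fst S) = 1}"
  then show "is_sg x" by simp
qed

lemma Excl_pv: assumes S: "is_sg S" and ji: "join_irreducible (pv_gen1 S)"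
  shows "pseudovariety (Excl S)"
  unfolding pseudovariety_def
proof (intro conjI allI ballI impI)
  have "pv_gen1 T0 \<subseteq> triv_pv" using pv1_least triv_pv_pv T0_in by blast
  moreover have "S \<notin> triv_pv" using nontriv[OF S ji] unfolding triv_pv_def by auto
  ultimately have "T0 \<in> Excl S" using T0_sg unfolding Excl_def by auto
  then show "Excl S \<noteq> {}" by auto
next
  fix T assume "T \<in> Excl S" then show "is_sg T" unfolding Excl_def by auto
next
  fix T1 T2 assume T: "T1 \<in> Excl S" "T2 \<in> Excl S"
  have sg: "is_sg T1" "is_sg T2" using T unfolding Excl_def by auto
  define J where "J = pv_join {pv_gen1 T1, pv_gen1 T2}"
  have Jpv: "pseudovariety J" unfolding J_def pv_join_def
    by (rule pv_gen_pv) (use pv_sg pv1_pv sg in blast)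
  have "T1 \<in> J" using pv_gen_sub[of "\<Union>{pv_gen1 T1, pv_gen1 T2}"] pv1_in[of T1]
    unfolding J_def pv_join_def by auto
  have "T2 \<in> J" using pv_gen_sub[of "\<Union>{pv_gen1 T1, pv_gen1 T2}"] pv1_in[of T2]
    unfolding J_def pv_join_def by auto
  have PJ: "prod_sg T1 T2 \<in> J" by (rule pv_prodI[OF Jpv]) fact+
  have allpv: "\<forall>X\<in>{pv_gen1 T1, pv_gen1 T2}. pseudovariety X" using pv1_pv sg by auto
  show "prod_sg T1 T2 \<in> Excl S"
  proof (rule ccontr)
    assume "prod_sg T1 T2 \<notin> Excl S"
    hence "S \<in> pv_gen1 (prod_sg T1 T2)" unfolding Excl_def using prod_is_sg[OF sg] by auto
    hence "S \<in> J" using pv1_least[OF Jpv PJ] by auto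
    hence "pv_gen1 S \<subseteq> J" using pv1_least[OF Jpv] by blast
    hence "\<exists>X\<in>{pv_gen1 T1, pv_gen1 T2}. pv_gen1 S \<subseteq> X"
      using ji[unfolded join_irreducible_def, THEN spec[of _ "{pv_gen1 T1, pv_gen1 T2}"]] allpv
      unfolding J_def by blast
    then have "S \<in> pv_gen1 T1 \<or> S \<in> pv_gen1 T2" using pv1_in[of S] by auto
    then show False using T unfolding Excl_def by auto
  qed
next
  fix A B :: "nat set" and m assume T: "(A, m) \<in> Excl S" "B \<subseteq> A" "sgrp B m"
  have "pv_gen1 (B, m) \<subseteq> pv_gen1 (A, m)"
    using pv1_least pv1_pv pv_subI pv1_in T unfolding Excl_def by blast
  then show "(B, m) \<in> Excl S" using T unfolding Excl_def is_sg_def by auto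
next
  fix A B :: "nat set" and m n h assume T: "(A, m) \<in> Excl S" "sgrp B n" "hom A m B n h" "h ` A = B"
  have "pv_gen1 (B, n) \<subseteq> pv_gen1 (A, m)"
    using pv1_least pv1_pv pv_homI pv1_in T unfolding Excl_def by blast
  then show "(B, n) \<in> Excl S" using T unfolding Excl_def is_sg_def by auto
qed




definition onem :: "nat set \<Rightarrow> (nat \<Rightarrow> nat \<Rightarrow> nat) \<Rightarrow> (nat \<Rightarrow> nat) \<Rightarrow> bool" where
  "onem R n \<phi> \<longleftrightarrow> (\<forall>x\<in>R. \<forall>y\<in>R. \<phi> x = \<phi> y \<longrightarrow> n (\<phi> x) (\<phi> x) = \<phi> x \<longrightarrow> x = y)"

definition Gp :: "sg \<Rightarrow> sg set" where
  "Gp S = {X. is_sg X \<and> (\<exists>(R::nat set) p (\<psi>::nat\<Rightarrow>nat) (B::nat set) n (\<phi>::nat\<Rightarrow>nat).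
      sgrp R p \<and> hom R p (fst X) (snd X) \<psi> \<and> \<psi> ` R = fst X \<and> (B, n) \<in> Excl S \<and>
      hom R p B n \<phi> \<and> onem R n \<phi>)}"

definition pmap :: "(nat \<Rightarrow> nat) \<Rightarrow> (nat \<Rightarrow> nat) \<Rightarrow> nat \<Rightarrow> nat" where
  "pmap h1 h2 x = prod_encode (h1 (fst (prod_decode x)), h2 (snd (prod_decode x)))"

lemma prod_hom:
  assumes "hom A1 m1 B1 n1 h1" "hom A2 m2 B2 n2 h2"
  shows "hom (fst (prod_sg (A1,m1) (A2,m2))) (snd (prod_sg (A1,m1) (A2,m2)))
             (fst (prod_sg (B1,n1) (B2,n2))) (snd (prod_sg (B1,n1) (B2,n2))) (pmap h1 h2)"
  using assms unfolding hom_def prod_sg_def pmap_def by auto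

lemma prod_onto:
  assumes "h1 ` A1 = B1" "h2 ` A2 = B2"
  shows "pmap h1 h2 ` (fst (prod_sg (A1,m1) (A2,m2))) = fst (prod_sg (B1,n1) (B2,n2))"
proof
  show "pmap h1 h2 ` fst (prod_sg (A1, m1) (A2, m2)) \<subseteq> fst (prod_sg (B1, n1) (B2, n2))"
    using assms unfolding prod_sg_def pmap_def by auto
next
  show "fst (prod_sg (B1, n1) (B2, n2)) \<subseteq> pmap h1 h2 ` fst (prod_sg (A1, m1) (A2, m2))"
  proof
    fix y assume "y \<in> fst (prod_sg (B1, n1) (B2, n2))"
    then obtain b1 b2 where b: "b1\<in>B1" "b2\<in>B2" "y = prod_encode (b1,b2)" unfolding prod_sg_def by auto
    then obtain a1 a2 where a: "a1\<in>A1" "a2\<in>A2" "h1 a1 = b1" "h2 a2 = b2" using assms by blast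
    have "y = pmap h1 h2 (prod_encode (a1,a2))" unfolding pmap_def using a b by simp
    moreover have "prod_encode (a1,a2) \<in> fst (prod_sg (A1, m1) (A2, m2))" unfolding prod_sg_def using a by auto
    ultimately show "y \<in> pmap h1 h2 ` fst (prod_sg (A1, m1) (A2, m2))" by blast
  qed
qed

lemma prod_onem:
  assumes "onem R1 n1 \<phi>1" "onem R2 n2 \<phi>2"
  shows "onem (fst (prod_sg (R1,p1) (R2,p2))) (snd (prod_sg (B1,n1) (B2,n2))) (pmap \<phi>1 \<phi>2)"
  unfolding onem_def
proof (intro ballI impI)
  fix x y assume x: "x \<in> fst (prod_sg (R1,p1) (R2,p2))" and y: "y \<in> fst (prod_sg (R1,p1) (R2,p2))"
    and e: "pmap \<phi>1 \<phi>2 x = pmap \<phi>1 \<phi>2 y"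
    and i: "snd (prod_sg (B1,n1) (B2,n2)) (pmap \<phi>1 \<phi>2 x) (pmap \<phi>1 \<phi>2 x) = pmap \<phi>1 \<phi>2 x"
  obtain a b where ab: "a\<in>R1" "b\<in>R2" "x = prod_encode (a,b)" using x unfolding prod_sg_def by auto
  obtain c d where cd: "c\<in>R1" "d\<in>R2" "y = prod_encode (c,d)" using y unfolding prod_sg_def by auto
  have 1: "\<phi>1 a = \<phi>1 c" "\<phi>2 b = \<phi>2 d" using e ab cd unfolding pmap_def by auto
  have 2: "n1 (\<phi>1 a) (\<phi>1 a) = \<phi>1 a" "n2 (\<phi>2 b) (\<phi>2 b) = \<phi>2 b"
    using i ab unfolding pmap_def prod_sg_def by auto
  have "a = c" using assms(1) ab cd 1 2 unfolding onem_def by blast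
  moreover have "b = d" using assms(2) ab cd 1 2 unfolding onem_def by blast
  ultimately show "x = y" using ab cd by simp
qed

lemma Gp_pv: assumes E: "pseudovariety (Excl S)" shows "pseudovariety (Gp S)"
  unfolding pseudovariety_def
proof (intro conjI allI impI ballI)
  obtain T where T: "T \<in> Excl S" using E unfolding pseudovariety_def by blast
  obtain B n where Bn: "T = (B, n)" by (cases T)
  have sB: "sgrp B n" using T Bn unfolding Excl_def is_sg_def by auto
  have "(B, n) \<in> Gp S" unfolding Gp_def
    using sB T Bn by (auto simp: is_sg_def hom_def onem_def intro!: exI[of _ B] exI[of _ n] exI[of _ "\<lambda>x. x"])
  then show "Gp S \<noteq> {}" by blast
next
  fix X assume "X \<in> Gp S" then show "is_sg X" unfolding Gp_def by auto
next
  fix X1 X2 assume X: "X1 \<in> Gp S" "X2 \<in> Gp S"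
  obtain A1 q1 A2 q2 where XX: "X1 = (A1, q1)" "X2 = (A2, q2)" by (cases X1, cases X2)
  obtain R1 p1 \<psi>1 B1 n1 \<phi>1 where G1: "sgrp R1 p1" "hom R1 p1 A1 q1 \<psi>1" "\<psi>1 ` R1 = A1"
    "(B1, n1) \<in> Excl S" "hom R1 p1 B1 n1 \<phi>1" "onem R1 n1 \<phi>1" using X(1) XX unfolding Gp_def by auto
  obtain R2 p2 \<psi>2 B2 n2 \<phi>2 where G2: "sgrp R2 p2" "hom R2 p2 A2 q2 \<psi>2" "\<psi>2 ` R2 = A2"
    "(B2, n2) \<in> Excl S" "hom R2 p2 B2 n2 \<phi>2" "onem R2 n2 \<phi>2" using X(2) XX unfolding Gp_def by auto
  have sgX: "is_sg X1" "is_sg X2" using X unfolding Gp_def by auto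
  have sR: "sgrp (fst (prod_sg (R1,p1) (R2,p2))) (snd (prod_sg (R1,p1) (R2,p2)))"
    using prod_is_sg[of "(R1,p1)" "(R2,p2)"] G1 G2 unfolding is_sg_def by auto
  have BE: "prod_sg (B1,n1) (B2,n2) \<in> Excl S" using pv_prodI[OF E G1(4) G2(4)] .
  have "prod_sg X1 X2 \<in> Gp S"
    unfolding Gp_def mem_Collect_eq
  proof (intro conjI)
    show "is_sg (prod_sg X1 X2)" using prod_is_sg sgX by blast
    show "\<exists>R p \<psi> B n \<phi>. sgrp R p \<and> hom R p (fst (prod_sg X1 X2)) (snd (prod_sg X1 X2)) \<psi> \<and>
        \<psi> ` R = fst (prod_sg X1 X2) \<and> (B, n) \<in> Excl S \<and> hom R p B n \<phi> \<and> onem R n \<phi>"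
      apply (rule exI[of _ "fst (prod_sg (R1,p1) (R2,p2))"])
      apply (rule exI[of _ "snd (prod_sg (R1,p1) (R2,p2))"])
      apply (rule exI[of _ "pmap \<psi>1 \<psi>2"])
      apply (rule exI[of _ "fst (prod_sg (B1,n1) (B2,n2))"])
      apply (rule exI[of _ "snd (prod_sg (B1,n1) (B2,n2))"])
      apply (rule exI[of _ "pmap \<phi>1 \<phi>2"])
      using sR prod_hom[OF G1(2) G2(2)] prod_onto[OF G1(3) G2(3)] BE prod_hom[OF G1(5) G2(5)]
        prod_onem[OF G1(6) G2(6)] unfolding XX by simp
  qed
  then show "prod_sg X1 X2 \<in> Gp S" .
next
  fix A B :: "nat set" and q assume H: "(A, q) \<in> Gp S" "B \<subseteq> A" "sgrp B q"
  obtain R p \<psi> C n \<phi> where G: "sgrp R p" "hom R p A q \<psi>" "\<psi> ` R = A"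
    "(C, n) \<in> Excl S" "hom R p C n \<phi>" "onem R n \<phi>" using H(1) unfolding Gp_def by auto
  define R' where "R' = {r\<in>R. \<psi> r \<in> B}"
  have sR': "sgrp R' p"
  proof -
    have "finite R'" using G(1) unfolding R'_def sgrp_def by auto
    moreover have "R' \<noteq> {}"
    proof -
      obtain b where "b \<in> B" using H(3) unfolding sgrp_def by auto
      then obtain r where "r\<in>R" "\<psi> r = b" using G(3) H(2) by blast
      then show ?thesis unfolding R'_def using \<open>b\<in>B\<close> by auto
    qed
    moreover have "\<forall>x\<in>R'. \<forall>y\<in>R'. p x y \<in> R'"
      using G(1,2) H(3) unfolding R'_def sgrp_def hom_def by auto
    moreover have "\<forall>x\<in>R'. \<forall>y\<in>R'. \<forall>z\<in>R'. p (p x y) z = p x (p y z)"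
      using G(1) unfolding R'_def sgrp_def by auto
    ultimately show ?thesis unfolding sgrp_def by blast
  qed
  have "hom R' p B q \<psi>" using G(2) unfolding R'_def hom_def by auto
  moreover have "\<psi> ` R' = B" using G(3) H(2) unfolding R'_def by auto
  moreover have "hom R' p C n \<phi>" using G(5) unfolding R'_def hom_def by auto
  moreover have "onem R' n \<phi>" using G(6) unfolding R'_def onem_def by auto
  ultimately show "(B, q) \<in> Gp S" unfolding Gp_def mem_Collect_eq fst_conv snd_conv is_sg_def
    using sR' G(4) H(3) by blast
next
  fix A B :: "nat set" and q n' h assume H: "(A, q) \<in> Gp S" "sgrp B n'" "hom A q B n' h" "h ` A = B"
  obtain R p \<psi> C n \<phi> where G: "sgrp R p" "hom R p A q \<psi>" "\<psi> ` R = A"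
    "(C, n) \<in> Excl S" "hom R p C n \<phi>" "onem R n \<phi>" using H(1) unfolding Gp_def by auto
  have "hom R p B n' (h \<circ> \<psi>)" using G(2) H(3) unfolding hom_def by auto
  moreover have "(h \<circ> \<psi>) ` R = B" using G(3) H(4) by (metis image_comp)
  ultimately show "(B, n') \<in> Gp S" unfolding Gp_def mem_Collect_eq fst_conv snd_conv is_sg_def
    using G H(2) by blast
qed

lemma notin_Gp:
  fixes A :: "nat set"
  assumes sA: "sgrp A m" and sst: "semisimple_type A m"
  shows "(A, m) \<notin> Gp (A, m)"
proof
  assume "(A, m) \<in> Gp (A, m)"
  then obtain R p \<psi> B n \<phi> where G: "sgrp R p" "hom R p A m \<psi>" "\<psi> ` R = A"
    "(B, n) \<in> Excl (A, m)" "hom R p B n \<phi>" "onem R n \<phi>" unfolding Gp_def by auto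
  have sB: "sgrp B n" using G(4) unfolding Excl_def is_sg_def by auto
  have fac: "\<And>r r'. r\<in>R \<Longrightarrow> r'\<in>R \<Longrightarrow> \<phi> r = \<phi> r' \<Longrightarrow> \<psi> r = \<psi> r'"
    using factor[OF G(1) sA sst G(2) G(3) G(5)] G(6) unfolding onem_def by blast
  define C where "C = \<phi> ` R"
  have CB: "C \<subseteq> B" using G(5) unfolding C_def hom_def by auto
  have phm: "\<And>x y. x\<in>R \<Longrightarrow> y\<in>R \<Longrightarrow> \<phi> (p x y) = n (\<phi> x) (\<phi> y)" using G(5) unfolding hom_def by auto
  have psm: "\<And>x y. x\<in>R \<Longrightarrow> y\<in>R \<Longrightarrow> \<psi> (p x y) = m (\<psi> x) (\<psi> y)" using G(2) unfolding hom_def by auto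
  have pR: "\<And>x y. x\<in>R \<Longrightarrow> y\<in>R \<Longrightarrow> p x y \<in> R" using G(1) unfolding sgrp_def by auto
  have sC: "sgrp C n"
  proof -
    have "finite C" "C \<noteq> {}" using G(1) unfolding C_def sgrp_def by auto
    moreover have "\<forall>x\<in>C. \<forall>y\<in>C. n x y \<in> C"
    proof (intro ballI)
      fix x y assume "x\<in>C" "y\<in>C"
      then obtain a b where "a\<in>R" "b\<in>R" "x = \<phi> a" "y = \<phi> b" unfolding C_def by auto
      then show "n x y \<in> C" unfolding C_def using phm pR by (metis image_eqI)
    qed
    moreover have "\<forall>x\<in>C. \<forall>y\<in>C. \<forall>z\<in>C. n (n x y) z = n x (n y z)"
      using sB CB unfolding sgrp_def by blast
    ultimately show ?thesis unfolding sgrp_def by blast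
  qed
  have "(C, n) \<in> pv_gen1 (B, n)"
    using pv_subI[OF pv1_pv pv1_in CB sC] sB unfolding is_sg_def by auto
  define h where "h y = \<psi> (SOME r. r\<in>R \<and> \<phi> r = y)" for y
  have hphi: "h (\<phi> r) = \<psi> r" if "r\<in>R" for r
  proof -
    have "(SOME r'. r'\<in>R \<and> \<phi> r' = \<phi> r) \<in> R \<and> \<phi> (SOME r'. r'\<in>R \<and> \<phi> r' = \<phi> r) = \<phi> r"
      using someI[of "\<lambda>r'. r'\<in>R \<and> \<phi> r' = \<phi> r" r] that by blast
    then show ?thesis unfolding h_def using fac that by blast
  qed
  have "hom C n A m h"
    unfolding hom_def
  proof (intro conjI ballI)
    fix x assume "x\<in>C"
    then obtain a where "a\<in>R" "x = \<phi> a" unfolding C_def by auto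
    then show "h x \<in> A" using hphi G(3) by auto
  next
    fix x y assume "x\<in>C" "y\<in>C"
    then obtain a b where ab: "a\<in>R" "b\<in>R" "x = \<phi> a" "y = \<phi> b" unfolding C_def by auto
    have "h (n x y) = h (\<phi> (p a b))" using ab phm by simp
    also have "\<dots> = m (\<psi> a) (\<psi> b)" using hphi pR ab psm by simp
    finally show "h (n x y) = m (h x) (h y)" using hphi ab by simp
  qed
  moreover have "h ` C = A"
  proof
    show "h ` C \<subseteq> A" using \<open>hom C n A m h\<close> unfolding hom_def by auto
    show "A \<subseteq> h ` C"
    proof
      fix a assume "a\<in>A"
      then obtain r where "r\<in>R" "a = \<psi> r" using G(3) by auto
      then show "a \<in> h ` C" unfolding C_def using hphi by (metis image_eqI)
    qed
  qed
  ultimately have "(A, m) \<in> pv_gen1 (B, n)"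
    using pv_homI[OF pv1_pv \<open>(C, n) \<in> pv_gen1 (B, n)\<close> sA] sB unfolding is_sg_def by auto
  then show False using G(4) unfolding Excl_def by auto
qed



theorem theorem4p2:
  fixes A :: "nat set" and m :: "nat \<Rightarrow> nat \<Rightarrow> nat"
  assumes "sgrp A m"
    and "subdirectly_indecomposable A m"
    and "join_irreducible (pv_gen1 (A, m))"
    and "semisimple_type A m"
  shows "malcev triv_pv (Excl (A, m)) = Excl (A, m)"
proof -
  have sS: "is_sg (A, m)" using assms(1) unfolding is_sg_def by simp
  have EP: "pseudovariety (Excl (A, m))" using Excl_pv[OF sS assms(3)] .
  have GP: "pseudovariety (Gp (A, m))" using Gp_pv[OF EP] .
  define Gens where "Gens = {(A', m'). sgrp A' m' \<and>
      (\<exists>B n \<phi>. (B, n) \<in> Excl (A, m) \<and> hom A' m' B n \<phi> \<and>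
         (\<forall>e\<in>B. n e e = e \<longrightarrow> {s\<in>A'. \<phi> s = e} \<noteq> {} \<longrightarrow> ({s\<in>A'. \<phi> s = e}, m') \<in> triv_pv))}"
  have M: "malcev triv_pv (Excl (A, m)) = pv_gen Gens" unfolding malcev_def Gens_def ..
  have sub1: "Excl (A, m) \<subseteq> Gens"
  proof
    fix T assume T: "T \<in> Excl (A, m)"
    obtain A' m' where TT: "T = (A', m')" by (cases T)
    have s: "sgrp A' m'" using T TT unfolding Excl_def is_sg_def by auto
    have "hom A' m' A' m' (\<lambda>x. x)" unfolding hom_def using s unfolding sgrp_def by auto
    moreover have "\<forall>e\<in>A'. m' e e = e \<longrightarrow> {s\<in>A'. s = e} \<noteq> {} \<longrightarrow> ({s\<in>A'. s = e}, m') \<in> triv_pv"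
    proof (intro ballI impI)
      fix e assume e: "e\<in>A'" "m' e e = e" "{s\<in>A'. s = e} \<noteq> {}"
      hence "{s\<in>A'. s = e} = {e}" by auto
      thus "({s\<in>A'. s = e}, m') \<in> triv_pv" unfolding triv_pv_def is_sg_def using sgrp_single e(2) by simp
    qed
    ultimately show "T \<in> Gens" unfolding Gens_def TT using s T TT by blast
  qed
  have sub2: "Gens \<subseteq> Excl (A, m)"
  proof
    fix T assume T: "T \<in> Gens"
    obtain A' m' where TT: "T = (A', m')" by (cases T)
    obtain B n \<phi> where G: "sgrp A' m'" "(B, n) \<in> Excl (A, m)" "hom A' m' B n \<phi>"
      "\<forall>e\<in>B. n e e = e \<longrightarrow> {s\<in>A'. \<phi> s = e} \<noteq> {} \<longrightarrow> ({s\<in>A'. \<phi> s = e}, m') \<in> triv_pv"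
      using T TT unfolding Gens_def by auto
    have om: "onem A' n \<phi>" unfolding onem_def
    proof (intro ballI impI)
      fix x y assume xy: "x\<in>A'" "y\<in>A'" "\<phi> x = \<phi> y" "n (\<phi> x) (\<phi> x) = \<phi> x"
      have "\<phi> x \<in> B" using G(3) xy unfolding hom_def by auto
      hence "({s\<in>A'. \<phi> s = \<phi> x}, m') \<in> triv_pv" using G(4) xy by blast
      hence "card {s\<in>A'. \<phi> s = \<phi> x} = 1" unfolding triv_pv_def by simp
      then obtain c where c: "{s\<in>A'. \<phi> s = \<phi> x} = {c}" using card_1_singletonE by blast
      have "x \<in> {s\<in>A'. \<phi> s = \<phi> x}" "y \<in> {s\<in>A'. \<phi> s = \<phi> x}" using xy by auto
      thus "x = y" unfolding c by simp
    qed
    have hid: "hom A' m' A' m' (\<lambda>x. x)" unfolding hom_def using G(1) unfolding sgrp_def by auto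
    have "(A', m') \<in> Gp (A, m)" unfolding Gp_def mem_Collect_eq fst_conv snd_conv is_sg_def
      apply (intro conjI)
       apply (simp add: G(1))
      apply (rule exI[of _ A'], rule exI[of _ m'], rule exI[of _ "\<lambda>x. x"], rule exI[of _ B],
             rule exI[of _ n], rule exI[of _ \<phi>])
      using G(1,2,3) om hid by simp
    hence "pv_gen1 (A', m') \<subseteq> Gp (A, m)" using pv1_least GP by blast
    moreover have "(A, m) \<notin> Gp (A, m)" using notin_Gp assms(1,4) by blast
    ultimately have "(A, m) \<notin> pv_gen1 (A', m')" by blast
    thus "T \<in> Excl (A, m)" unfolding Excl_def TT is_sg_def using G(1) by simp
  qed
  show ?thesis unfolding M using pv_gen_least[OF EP sub2] pv_gen_sub[of Gens] sub1 by blast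
qed

end
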